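(* Let $\alpha\in(0,1]$, let $F\in C^{1,\alpha}_{\mathsf h}(\mathbb H,\mathbb R^2)$, let $p\in\mathbb H$ be a nondegenerate point for $F$, let $I\subseteq\mathbb R$ be an interval and let $\gamma:I\to\mathbb H$ be a solution to the level set differential equation (LSDE) associated to $F$ and $p$. Then there exist $\delta>0$ and $\varrho>0$ such that $$|t-s|^{1/2}\le \varrho\,\mathsf d(\gamma_s,\gamma_t)\quad\text{for all } s,t\in I \text{ with } |t-s|\le 2\delta.$$
   Context: The Heisenberg group $\mathbb H$ is $\mathbb R^3$ with product $(x^1,x^2,x^3)(y^1,y^2,y^3)=(x^1+y^1,x^2+y^2,x^3+y^3+x^1y^2-x^2y^1)$ (identity $0$, inverse $x^{-1}=-x$). For $x\in\mathbb H$ write $x^{\mathsf h}=(x^1,x^2)\in\mathbb R^2$, $x^{\mathsf v}=x^3$, $[x]^{\mathsf h}=|x^{\mathsf h}|$, $[x]^{\mathsf v}=\sqrt{|x^3|}$. Dilations are $\delta_r(x)=(rx^1,rx^2,r^2x^3)$. $\mathsf d$ is a fixed distance on $\mathbb H$ which is left-invariant ($\mathsf d(zx,zy)=\mathsf d(x,y)$) and $1$-homogeneous ($\mathsf d(\delta_rx,\delta_ry)=r\,\mathsf d(x,y)$); $B(x,r)$ denotes the open $\mathsf d$-ball. Horizontal vector fields: $X_1=\partial_1-x^2\partial_3$, $X_2=\partial_2+x^1\partial_3$. For $\alpha\in(0,1]$, $C^{1,\alpha}_{\mathsf h}(\mathbb H,\mathbb R^k)$ is the set of $F:\mathbb H\to\mathbb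 R^k$ such that $X_1F,X_2F$ exist everywhere and the horizontal Jacobian $\nabla_{\mathsf h}F=[X_1F,X_2F]$ (a $k\times2$ matrix) is $\alpha$-Hölder with respect to $\mathsf d$ on every bounded set. A point $p$ is nondegenerate for $F:\mathbb H\to\mathbb R^2$ if $\nabla_{\mathsf h}F(p)$ is invertible. Set $\mathrm R(x,y):=F(y)-F(x)-\nabla_{\mathsf h}F(x)\,(x^{-1}y)^{\mathsf h}$. LSDE: given $F\in C^{1,\alpha}_{\mathsf h}(\mathbb H,\mathbb R^2)$, $p$ nondegenerate and an interval $I$, a continuous $\gamma:I\to\mathbb H$ is a solution if for all $s,t\in I$: $(\gamma_s^{-1}\gamma_t)^{\mathsf h}=-\nabla_{\mathsf h}F(p)^{-1}(\mathrm R(p,\gamma_t)-\mathrm R(p,\gamma_s))$ and $(\gamma_s^{-1}\gamma_t)^{\mathsf v}=t-s+\mathbb E_{st}$, where $\mathbb E:I^2\to\mathbb R$ satisfies $\|\mathbb E\|:=\sup_{s\neq t}|\mathbb E_{st}|/|t-s|^{1+\alpha}<\infty$. *)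

theory Defs
  imports "HOL-Analysis.Analysis"
begin

type_synonym heis = "real \<times> real \<times> real"

definition hmul :: "heis \<Rightarrow> heis \<Rightarrow> heis" where
  "hmul x y = (fst x + fst y, fst (snd x) + fst (snd y),
       snd (snd x) + snd (snd y) + fst x * fst (snd y) - fst (snd x) * fst y)"

definition hinv :: "heis \<Rightarrow> heis" where
  "hinv x = - x"

definition dil :: "real \<Rightarrow> heis \<Rightarrow> heis" where
  "dil r x = (r * fst x, r * fst (snd x), r\<^sup>2 * snd (snd x))"

definition hpart :: "heis \<Rightarrow> real^2" where
  "hpart x = vector [fst x, fst (snd x)]"

definition vpart :: "heis \<Rightarrow> real" where
  "vpart x = snd (snd x)"

definition homog_left_inv_dist :: "(heis \<Rightarrow> heis \<Rightarrow> real) \<Rightarrow> bool" where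
  "homog_left_inv_dist d \<longleftrightarrow>
     (\<forall>x y. 0 \<le> d x y) \<and> (\<forall>x y. d x y = 0 \<longleftrightarrow> x = y) \<and> (\<forall>x y. d x y = d y x) \<and>
     (\<forall>x y z. d x z \<le> d x y + d y z) \<and>
     (\<forall>x y z. d (hmul z x) (hmul z y) = d x y) \<and>
     (\<forall>r x y. r > 0 \<longrightarrow> d (dil r x) (dil r y) = r * d x y)"

text \<open>Horizontal derivatives: X1 F (x) = d/dt F(x (t,0,0)) at t = 0, i.e.
  (d_1 - x2 d_3) F; X2 F (x) = d/dt F(x (0,t,0)) at t = 0, i.e. (d_2 + x1 d_3) F.\<close>
definition X1 :: "(heis \<Rightarrow> real^2) \<Rightarrow> heis \<Rightarrow> real^2" where
  "X1 F x = vector_derivative (\<lambda>t. F (hmul x (t, 0, 0))) (at 0)"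

definition X2 :: "(heis \<Rightarrow> real^2) \<Rightarrow> heis \<Rightarrow> real^2" where
  "X2 F x = vector_derivative (\<lambda>t. F (hmul x (0, t, 0))) (at 0)"

definition nabla_h :: "(heis \<Rightarrow> real^2) \<Rightarrow> heis \<Rightarrow> real^2^2" where
  "nabla_h F x = (\<chi> i j. if j = 1 then X1 F x $ i else X2 F x $ i)"

definition C1alpha_h :: "(heis \<Rightarrow> heis \<Rightarrow> real) \<Rightarrow> real \<Rightarrow> (heis \<Rightarrow> real^2) \<Rightarrow> bool" where
  "C1alpha_h d \<alpha> F \<longleftrightarrow>
     (\<forall>x. (\<lambda>t. F (hmul x (t, 0, 0))) differentiable (at 0) \<and>
          (\<lambda>t. F (hmul x (0, t, 0))) differentiable (at 0)) \<and>
     (\<forall>K. (\<exists>R. \<forall>x\<in>K. d 0 x \<le> R) \<longrightarrow>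
          (\<exists>C. \<forall>x\<in>K. \<forall>y\<in>K. norm (nabla_h F x - nabla_h F y) \<le> C * d x y powr \<alpha>))"

definition nondegenerate :: "(heis \<Rightarrow> real^2) \<Rightarrow> heis \<Rightarrow> bool" where
  "nondegenerate F p \<longleftrightarrow> invertible (nabla_h F p)"

definition Rem :: "(heis \<Rightarrow> real^2) \<Rightarrow> heis \<Rightarrow> heis \<Rightarrow> real^2" where
  "Rem F x y = F y - F x - nabla_h F x *v hpart (hmul (hinv x) y)"

definition LSDE_solution ::
  "real \<Rightarrow> (heis \<Rightarrow> real^2) \<Rightarrow> heis \<Rightarrow> real set \<Rightarrow> (real \<Rightarrow> heis) \<Rightarrow> bool" where
  "LSDE_solution \<alpha> F p I \<gamma> \<longleftrightarrow>
     continuous_on I \<gamma> \<and>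
     (\<forall>s\<in>I. \<forall>t\<in>I. hpart (hmul (hinv (\<gamma> s)) (\<gamma> t)) =
         - (matrix_inv (nabla_h F p) *v (Rem F p (\<gamma> t) - Rem F p (\<gamma> s)))) \<and>
     (\<exists>E :: real \<Rightarrow> real \<Rightarrow> real.
         (\<forall>s\<in>I. \<forall>t\<in>I. vpart (hmul (hinv (\<gamma> s)) (\<gamma> t)) = t - s + E s t) \<and>
         (\<exists>M. \<forall>s\<in>I. \<forall>t\<in>I. s \<noteq> t \<longrightarrow> \<bar>E s t\<bar> \<le> M * \<bar>t - s\<bar> powr (1 + \<alpha>)))"

end

theory Submission
  imports Defs
begin

lemma hd_props:
  assumes "homog_left_inv_dist d"
  shows "\<And>x y. d x y = d y x" "\<And>x y z. d x z \<le> d x y + d y z"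
    "\<And>x y z. d (hmul z x) (hmul z y) = d x y"
    "\<And>r x y. r > 0 \<Longrightarrow> d (dil r x) (dil r y) = r * d x y"
    "\<And>x y. d x y = 0 \<longleftrightarrow> x = y" "\<And>x y. 0 \<le> d x y"
  using assms unfolding homog_left_inv_dist_def by blast+

lemma hmul_0: "hmul x 0 = x" by (simp add: hmul_def zero_prod_def)
lemma hmul_inv: "hmul (hinv x) x = 0"
  by (cases x) (simp add: hmul_def hinv_def zero_prod_def)

lemma d_neg:
  assumes H: "homog_left_inv_dist d"
  shows "d 0 (- x) = d 0 x"
proof -
  have "d 0 (- x) = d (hmul x 0) (hmul x (- x))" using hd_props(3)[OF H] by simp
  also have "hmul x 0 = x" by (simp add: hmul_def)
  also have "hmul x (- x) = 0"
    by (cases x) (auto simp: hmul_def algebra_simps zero_prod_def)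
  finally show ?thesis using hd_props(1)[OF H] by simp
qed

lemma d_vert_pos:
  assumes H: "homog_left_inv_dist d" and w: "w > 0"
  shows "d 0 (0,0,w) = sqrt w * d 0 (0,0,1)"
proof -
  have "dil (sqrt w) (0,0,1) = (0,0,w)" using w by (simp add: dil_def)
  moreover have "dil (sqrt w) 0 = 0" by (simp add: dil_def zero_prod_def)
  ultimately show ?thesis using hd_props(4)[OF H, of "sqrt w" 0 "(0,0,1)"] w by simp
qed

lemma d_vert:
  assumes H: "homog_left_inv_dist d"
  shows "d 0 (0,0,w) = sqrt \<bar>w\<bar> * d 0 (0,0,1)"
proof (cases "w > 0")
  case True then show ?thesis using d_vert_pos[OF H True] by simp
next
  case False
  show ?thesis
  proof (cases "w = 0")
    case True then show ?thesis using hd_props(5)[OF H] by (simp add: zero_prod_def)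
  next
    case False
    then have "-w > 0" using \<open>\<not> w > 0\<close> by simp
    have "d 0 (0,0,w) = d 0 (- (0,0,-w))" by simp
    also have "\<dots> = d 0 (0,0,-w)" by (rule d_neg[OF H])
    also have "\<dots> = sqrt (-w) * d 0 (0,0,1)" using d_vert_pos[OF H \<open>-w>0\<close>] .
    finally show ?thesis using \<open>-w>0\<close> by simp
  qed
qed

lemma d_lower:
  assumes H: "homog_left_inv_dist d"
  shows "sqrt (\<bar>v\<bar>/2) * d 0 (0,0,1) \<le> 2 * d 0 (h1,h2,v)"
proof -
  define z where "z = (h1,h2,v)"
  define zz where "zz = hmul z z"
  define u where "u = (h1,h2,v/2)"
  have zz: "zz = (2*h1, 2*h2, 2 * v)" unfolding zz_def z_def hmul_def by simp
  have "d 0 zz \<le> d 0 z + d z zz" using hd_props(2)[OF H] .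
  moreover have "d z zz = d 0 z"
  proof -
    have "d z zz = d (hmul z 0) (hmul z z)" by (simp only: hmul_0 zz_def)
    then show ?thesis using hd_props(3)[OF H, of z 0 z] by simp
  qed
  ultimately have 1: "d 0 zz \<le> 2 * d 0 z" by simp
  have "dil (1/2) zz = u" "dil (1/2) 0 = 0" unfolding zz u_def
    by (auto simp: dil_def zero_prod_def power2_eq_square)
  then have "d 0 u = 1/2 * d 0 zz" using hd_props(4)[OF H, of "1/2" 0 zz] by simp
  with 1 have 2: "d 0 u \<le> d 0 z" by simp
  have w: "hmul z (- u) = (0,0,v/2)" unfolding z_def u_def hmul_def by (simp add: algebra_simps)
  have "d 0 (0,0,v/2) \<le> d 0 z + d z (0,0,v/2)" using hd_props(2)[OF H] .
  moreover have "d z (0,0,v/2) = d 0 (- u)"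
  proof -
    have "d z (0,0,v/2) = d (hmul z 0) (hmul z (- u))" by (simp only: hmul_0 w)
    then show ?thesis using hd_props(3)[OF H, of z 0 "- u"] by simp
  qed
  moreover have "d 0 (- u) = d 0 u" by (rule d_neg[OF H])
  ultimately have "d 0 (0,0,v/2) \<le> 2 * d 0 z" using 2 by simp
  moreover have "d 0 (0,0,v/2) = sqrt (\<bar>v\<bar>/2) * d 0 (0,0,1)"
    using d_vert[OF H, of "v/2"] by simp
  ultimately show ?thesis unfolding z_def by simp
qed

lemma L1: assumes "(M'::real) > 0" "(\<alpha>::real) > 0" shows "(2*((1/(2*M')) powr (1/\<alpha>) / 2)) powr \<alpha> = 1/(2*M')"
proof -
  have "(2*((1/(2*M')) powr (1/\<alpha>) / 2)) = (1/(2*M')) powr (1/\<alpha>)" by simp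
  also have "\<dots> powr \<alpha> = (1/(2*M')) powr (1/\<alpha> * \<alpha>)" by (rule powr_powr)
  also have "1/\<alpha> * \<alpha> = 1" using assms by simp
  finally show ?thesis using assms by simp
qed
lemma L2: "\<bar>t - s\<bar> \<le> 2 * (\<delta>::real) \<Longrightarrow> (\<alpha>::real) > 0 \<Longrightarrow> \<bar>t - s\<bar> powr \<alpha> \<le> (2*\<delta>) powr \<alpha>"
  apply (rule powr_mono2) apply linarith apply simp apply assumption done
lemma L3: "(s::real) \<noteq> t \<Longrightarrow> \<bar>t - s\<bar> powr (1 + \<alpha>) = \<bar>t - s\<bar> * \<bar>t - s\<bar> powr \<alpha>"
  by (simp only: powr_add powr_one_gt_zero_iff) simp
lemma L6: "sqrt ((y::real)/2) * A \<le> 2 * D \<Longrightarrow> A > 0 \<Longrightarrow> 2 * sqrt (y/2) \<le> 2 * (2 * D / A)" 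
  by (simp add: pos_le_divide_eq) (simp add: mult.commute)

theorem mainTheorem1:
  fixes d :: "heis \<Rightarrow> heis \<Rightarrow> real" and \<alpha> :: real and F :: "heis \<Rightarrow> real^2"
    and p :: heis and I :: "real set" and \<gamma> :: "real \<Rightarrow> heis"
  assumes "homog_left_inv_dist d"
    and "0 < \<alpha>" and "\<alpha> \<le> 1"
    and "C1alpha_h d \<alpha> F"
    and "nondegenerate F p"
    and "is_interval I"
    and "LSDE_solution \<alpha> F p I \<gamma>"
  shows "\<exists>\<delta>>0. \<exists>\<rho>>0. \<forall>s\<in>I. \<forall>t\<in>I. \<bar>t - s\<bar> \<le> 2 * \<delta> \<longrightarrow>
           sqrt \<bar>t - s\<bar> \<le> \<rho> * d (\<gamma> s) (\<gamma> t)"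
proof -
  note H = assms(1)
  obtain E where h1: "\<forall>s\<in>I. \<forall>t\<in>I. vpart (hmul (hinv (\<gamma> s)) (\<gamma> t)) = t - s + E s t"
    and h2: "\<exists>M. \<forall>s\<in>I. \<forall>t\<in>I. s \<noteq> t \<longrightarrow> \<bar>E s t\<bar> \<le> M * \<bar>t - s\<bar> powr (1 + \<alpha>)"
    using assms(7) unfolding LSDE_solution_def by blast
  obtain M where h3: "\<forall>s\<in>I. \<forall>t\<in>I. s \<noteq> t \<longrightarrow> \<bar>E s t\<bar> \<le> M * \<bar>t - s\<bar> powr (1 + \<alpha>)"
    using h2 by (elim exE)
  have EV: "vpart (hmul (hinv (\<gamma> s)) (\<gamma> t)) = t - s + E s t" if "s\<in>I" "t\<in>I" for s t
    using h1 that by simp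
  have EM: "\<bar>E s t\<bar> \<le> M * \<bar>t - s\<bar> powr (1 + \<alpha>)" if "s\<in>I" "t\<in>I" "s \<noteq> t" for s t
    using h3 that by simp
  define M' where "M' = max M 0 + 1"
  have M'pos: "M' > 0" unfolding M'_def by simp
  define \<delta> where "\<delta> = (1/(2*M')) powr (1/\<alpha>) / 2"
  have \<delta>pos: "\<delta> > 0" unfolding \<delta>_def using M'pos by simp
  have d2: "(2*\<delta>) powr \<alpha> = 1/(2*M')"
    unfolding \<delta>_def using L1[OF M'pos assms(2)] .
  define A where "A = d 0 (0,0,1)"
  have Apos: "A > 0" unfolding A_def using hd_props(5,6)[OF H, of 0 "(0,0,1)"]
    by (auto simp: zero_prod_def)
  have "\<forall>s\<in>I. \<forall>t\<in>I. \<bar>t - s\<bar> \<le> 2 * \<delta> \<longrightarrow> sqrt \<bar>t - s\<bar> \<le> (4/A) * d (\<gamma> s) (\<gamma> t)"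
  proof (intro ballI impI)
    fix s t assume s: "s \<in> I" and t: "t \<in> I" and st: "\<bar>t - s\<bar> \<le> 2 * \<delta>"
    show "sqrt \<bar>t - s\<bar> \<le> (4/A) * d (\<gamma> s) (\<gamma> t)"
    proof (cases "s = t")
      case True then show ?thesis using hd_props(6)[OF H] Apos by simp
    next
      case False
      define z where "z = hmul (hinv (\<gamma> s)) (\<gamma> t)"
      have dz: "d (\<gamma> s) (\<gamma> t) = d 0 z"
        using hd_props(3)[OF H, of "hinv (\<gamma> s)" "\<gamma> s" "\<gamma> t"] unfolding z_def
        by (simp add: hmul_inv)
      have vz: "snd (snd z) = t - s + E s t" using EV[OF s t] unfolding z_def vpart_def .
      have "\<bar>t - s\<bar> powr \<alpha> \<le> (2*\<delta>) powr \<alpha>"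
        using L2[OF st assms(2)] .
      hence pa: "\<bar>t - s\<bar> powr \<alpha> \<le> 1/(2*M')" using d2 by simp
      have "\<bar>E s t\<bar> \<le> M * \<bar>t - s\<bar> powr (1 + \<alpha>)" using EM[OF s t False] .
      also have "\<dots> \<le> M' * \<bar>t - s\<bar> powr (1 + \<alpha>)"
        unfolding M'_def by (intro mult_right_mono) simp_all
      also have "\<bar>t - s\<bar> powr (1 + \<alpha>) = \<bar>t - s\<bar> * \<bar>t - s\<bar> powr \<alpha>"
        using L3[OF False] .
      also have "M' * (\<bar>t - s\<bar> * \<bar>t - s\<bar> powr \<alpha>) \<le> M' * (\<bar>t - s\<bar> * (1/(2*M')))"
        using mult_left_mono[OF mult_left_mono[OF pa, of "\<bar>t - s\<bar>"], of M'] M'pos by simp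
      also have "\<dots> = \<bar>t - s\<bar> / 2" using M'pos by simp
      finally have "\<bar>E s t\<bar> \<le> \<bar>t - s\<bar> / 2" .
      hence v2: "\<bar>t - s\<bar> \<le> 2 * \<bar>snd (snd z)\<bar>" using vz by (auto simp: abs_if split: if_splits)
      have low: "sqrt (\<bar>snd (snd z)\<bar>/2) * A \<le> 2 * d 0 z"
        using d_lower[OF H, of "snd (snd z)" "fst z" "fst (snd z)"] unfolding A_def by (simp only: prod.collapse)
      have "sqrt \<bar>t - s\<bar> \<le> sqrt (4 * (\<bar>snd (snd z)\<bar>/2))" using v2 by simp
      also have "\<dots> = 2 * sqrt (\<bar>snd (snd z)\<bar>/2)" by (subst real_sqrt_mult) simp
      also have "\<dots> \<le> 2 * (2 * d 0 z / A)" using L6[OF low Apos] .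
      finally show ?thesis using dz by simp
    qed
  qed
  moreover have "4/A > 0" using Apos by simp
  ultimately show ?thesis using \<delta>pos by (intro exI[of _ \<delta>] conjI exI[of _ "4/A"])
qed

end
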